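(* $\mathfrak{cp}(\mathsf{meager}\setminus\{\emptyset\},\subseteq)=\operatorname{cof}(\mathsf{meager})$.
   Context: $\mathsf{meager}$ is the ideal of meager subsets of $2^\omega$, ordered by inclusion. For a poset $(P,\le)$, $F\subseteq P$ is a comparable family if for every $p\in P$ there is $q\in F$ with $p\le q$ or $q\le p$; $\mathfrak{cp}(P)$ is the minimal size of a comparable family. $\operatorname{cof}(\mathsf{meager})$ is the minimal size of a family $\mathcal{F}\subseteq\mathsf{meager}$ such that every meager set is contained in some member of $\mathcal{F}$. *)

theory Defs
  imports "HOL-Analysis.Analysis"
begin

text \<open>Cantor space 2^omega is the type nat \<Rightarrow> bool with the product topology
  (instance from Function_Topology, bool carrying the discrete topology).\<close>

definition nowhere_dense :: "('a::topological_space) set \<Rightarrow> bool" where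
  "nowhere_dense A \<longleftrightarrow> interior (closure A) = {}"

definition meager :: "('a::topological_space) set \<Rightarrow> bool" where
  "meager M \<longleftrightarrow> (\<exists>\<F>. countable \<F> \<and> (\<forall>A\<in>\<F>. nowhere_dense A) \<and> M \<subseteq> \<Union>\<F>)"

definition meager_ideal :: "(nat \<Rightarrow> bool) set set" where
  "meager_ideal = {M. meager M}"

definition comparable_family :: "'a set \<Rightarrow> ('a \<Rightarrow> 'a \<Rightarrow> bool) \<Rightarrow> 'a set \<Rightarrow> bool" where
  "comparable_family P le F \<longleftrightarrow> F \<subseteq> P \<and> (\<forall>p\<in>P. \<exists>q\<in>F. le p q \<or> le q p)"

definition meager_cofinal_family :: "(nat \<Rightarrow> bool) set set \<Rightarrow> bool" where
  "meager_cofinal_family \<F> \<longleftrightarrow> \<F> \<subseteq> meager_ideal \<and> (\<forall>M\<in>meager_ideal. \<exists>B\<in>\<F>. M \<subseteq> B)"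

end

theory Submission imports Defs begin
instance bool :: second_countable_topology
proof
  show "\<exists>B::bool set set. countable B \<and> open = generate_topology B"
    apply (rule exI[of _ UNIV])
    apply (auto simp: generate_topology.Basis open_discrete)
    done
qed
type_synonym cs = "nat \<Rightarrow> bool"

lemma compact_space_cs: "compact_space (euclidean :: cs topology)"
proof -
  have "compact_space (product_topology (\<lambda>_::nat. (euclidean::bool topology)) UNIV)"
  proof -
    have "compact_space (euclidean::bool topology)"
      unfolding compact_space_def by (simp add: compactin_euclidean_iff finite_imp_compact)
    thus ?thesis by (simp add: compact_space_product_topology)
  qed
  thus ?thesis by (simp add: euclidean_product_topology)
qed

lemma Hausdorff_space_t2: "Hausdorff_space (euclidean :: 'a::t2_space topology)"
  unfolding Hausdorff_space_def
  using hausdorff by (fastforce simp: disjnt_def)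

lemma Hausdorff_cs: "Hausdorff_space (euclidean :: cs topology)"
proof -
  have "Hausdorff_space (product_topology (\<lambda>_::nat. (euclidean::bool topology)) UNIV)"
    by (simp add: Hausdorff_space_product_topology Hausdorff_space_t2)
  thus ?thesis by (simp add: euclidean_product_topology)
qed

lemma not_meager_UNIV: "\<not> meager (UNIV :: cs set)"
proof
  assume "meager (UNIV :: cs set)"
  then obtain \<F> :: "cs set set" where F: "countable \<F>" "\<forall>A\<in>\<F>. nowhere_dense A" "UNIV \<subseteq> \<Union>\<F>"
    unfolding meager_def by blast
  have reg: "regular_space (euclidean :: cs topology)"
    by (rule compact_Hausdorff_imp_regular_space) (simp_all add: compact_space_cs Hausdorff_cs)
  have lc: "locally_compact_space (euclidean :: cs topology)"
    by (simp add: compact_imp_locally_compact_space compact_space_cs)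
  have "(euclidean :: cs topology) interior_of \<Union>(closure ` \<F>) = {}"
  proof (rule Baire_category_alt)
    show "completely_metrizable_space (euclidean :: cs topology) \<or>
      locally_compact_space (euclidean :: cs topology) \<and> regular_space (euclidean :: cs topology)"
      using lc reg by blast
    show "countable (closure ` \<F>)" using F(1) by blast
    fix T assume "T \<in> closure ` \<F>"
    then obtain A where A: "A \<in> \<F>" "T = closure A" by blast
    have "closed T" using A by simp
    moreover have "interior T = {}" using A F(2) unfolding nowhere_dense_def by blast
    ultimately show "closedin euclidean T \<and> euclidean interior_of T = {}"
      by (simp add: euclidean_interior_of)
  qed
  moreover have "\<Union>(closure ` \<F>) = UNIV" using F(3) closure_subset by blast
  ultimately show False by (simp add: euclidean_interior_of)
qed

lemma meager_subset: assumes "meager A" "B \<subseteq> A" shows "meager B"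
  using assms unfolding meager_def by (meson subset_trans)

lemma meager_Un: assumes "meager A" "meager B" shows "meager (A \<union> B)"
proof -
  obtain F1 where 1: "countable F1" "\<forall>A\<in>F1. nowhere_dense A" "A \<subseteq> \<Union>F1"
    using assms(1) unfolding meager_def by blast
  obtain F2 where 2: "countable F2" "\<forall>A\<in>F2. nowhere_dense A" "B \<subseteq> \<Union>F2"
    using assms(2) unfolding meager_def by blast
  have "countable (F1 \<union> F2)" using 1(1) 2(1) by simp
  moreover have "\<forall>A\<in>F1 \<union> F2. nowhere_dense A" using 1(2) 2(2) by blast
  moreover have "A \<union> B \<subseteq> \<Union>(F1 \<union> F2)" using 1(3) 2(3) by blast
  ultimately show ?thesis unfolding meager_def by blast
qed

lemma nowhere_dense_closed: "closed K \<Longrightarrow> interior K = {} \<Longrightarrow> nowhere_dense K"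
  unfolding nowhere_dense_def by (simp add: closure_closed)

lemma meager_closed_cover:
  assumes "meager A"
  obtains \<F> where "countable \<F>" "\<And>K. K \<in> \<F> \<Longrightarrow> closed K \<and> interior K = {}" "A \<subseteq> \<Union>\<F>"
proof -
  from assms obtain \<F> where F: "countable \<F>" "\<forall>A\<in>\<F>. nowhere_dense A" "A \<subseteq> \<Union>\<F>"
    unfolding meager_def by blast
  have 1: "countable (closure ` \<F>)" using F(1) by simp
  have 2: "closed K \<and> interior K = {}" if K: "K \<in> closure ` \<F>" for K
  proof -
    obtain B where B: "B \<in> \<F>" "K = closure B" using K by blast
    have i: "interior (closure B) = {}" using F(2) B(1) unfolding nowhere_dense_def by blast
    have c: "closed (closure B)" by (rule closed_closure)
    show ?thesis unfolding B(2) using c i by (rule conjI)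
  qed
  have 3: "A \<subseteq> \<Union> (closure ` \<F>)"
  proof
    fix x assume "x \<in> A"
    then obtain B where "B \<in> \<F>" "x \<in> B" using F(3) by blast
    then show "x \<in> \<Union> (closure ` \<F>)" using closure_subset[of B] by blast
  qed
  show ?thesis by (rule that[OF 1 2 3])
qed

lemma nowhere_dense_homeo:
  assumes h: "homeomorphism UNIV UNIV f g" and A: "nowhere_dense A"
  shows "nowhere_dense (f ` A)"
  unfolding nowhere_dense_def
proof (rule ccontr)
  assume "interior (closure (f ` A)) \<noteq> {}"
  then obtain x where x: "x \<in> interior (closure (f ` A))" by blast
  define W where "W = interior (closure (f ` A))"
  have cf: "continuous_on UNIV f" and cg: "continuous_on UNIV g"
    and gf: "\<And>x. g (f x) = x" and fg: "\<And>y. f (g y) = y"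
    using h unfolding homeomorphism_def by auto
  have gcl: "g ` closure (f ` A) \<subseteq> closure A"
    by (rule image_closure_subset) (use cg gf in \<open>auto intro: continuous_on_subset simp: closure_subset image_image\<close>)
  have ov: "\<forall>B. open B \<longrightarrow> open (f -` B \<inter> UNIV)"
    using continuous_on_open_vimage[of UNIV f] cf by simp
  have "open (f -` W)"
    using ov unfolding W_def by simp
  moreover have "g x \<in> f -` W" using x fg W_def by simp
  moreover have "f -` W \<subseteq> closure A"
  proof
    fix z assume "z \<in> f -` W"
    then have "f z \<in> closure (f ` A)" using W_def interior_subset by auto
    then have "g (f z) \<in> closure A" using gcl by blast
    thus "z \<in> closure A" using gf by simp
  qed
  ultimately have "g x \<in> interior (closure A)" by (meson interiorI)
  thus False using A unfolding nowhere_dense_def by simp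
qed

lemma meager_homeo:
  assumes h: "homeomorphism UNIV UNIV f g" and A: "meager A"
  shows "meager (f ` A)"
proof -
  from A obtain \<F> where F: "countable \<F>" "\<forall>A\<in>\<F>. nowhere_dense A" "A \<subseteq> \<Union>\<F>"
    unfolding meager_def by blast
  show ?thesis unfolding meager_def
  proof (intro exI conjI)
    show "countable ((\<lambda>B. f ` B) ` \<F>)" using F(1) by simp
    show "\<forall>B\<in>(\<lambda>B. f ` B) ` \<F>. nowhere_dense B" using F(2) nowhere_dense_homeo[OF h] by blast
    show "f ` A \<subseteq> \<Union> ((\<lambda>B. f ` B) ` \<F>)" using F(3) by blast
  qed
qed


lemma nowhere_dense_Times_UNIV:
  assumes "nowhere_dense (A :: 'a::topological_space set)"
  shows "nowhere_dense (A \<times> (UNIV :: 'b::topological_space set))"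
proof -
  have i: "interior (closure A) = {}" using assms unfolding nowhere_dense_def .
  have "closure (A \<times> (UNIV :: 'b set)) = closure A \<times> UNIV"
    by (simp add: closure_Times)
  moreover have "interior (closure A \<times> (UNIV :: 'b set)) = {}"
    by (simp add: interior_Times i)
  ultimately show ?thesis unfolding nowhere_dense_def by simp
qed

lemma meager_Times_UNIV:
  assumes "meager (M :: 'a::topological_space set)"
  shows "meager (M \<times> (UNIV :: 'b::topological_space set))"
proof -
  obtain \<F> where F: "countable \<F>" "\<forall>A\<in>\<F>. nowhere_dense A" "M \<subseteq> \<Union>\<F>"
    using assms unfolding meager_def by blast
  have 1: "countable ((\<lambda>A. A \<times> (UNIV :: 'b set)) ` \<F>)" using F(1) by simp
  have 2: "\<forall>B\<in>(\<lambda>A. A \<times> (UNIV :: 'b set)) ` \<F>. nowhere_dense B"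
    using F(2) nowhere_dense_Times_UNIV by blast
  have 3: "M \<times> (UNIV :: 'b set) \<subseteq> \<Union> ((\<lambda>A. A \<times> (UNIV :: 'b set)) ` \<F>)"
    using F(3) by blast
  show ?thesis unfolding meager_def using 1 2 3 by blast
qed

lemma closed_section:
  assumes "closed (K :: ('a::topological_space \<times> 'b::topological_space) set)"
  shows "closed {a. (a, c) \<in> K}"
proof -
  have "{a. (a, c) \<in> K} = (\<lambda>a. (a, c)) -` K" by auto
  moreover have "closed ((\<lambda>a. (a, c)) -` K)"
    using continuous_closed_preimage[of UNIV "\<lambda>a. (a, c)" K] assms
    by (simp add: continuous_on_Pair continuous_on_id continuous_on_const)
  ultimately show ?thesis by simp
qed

lemma closed_E:
  assumes "closed (K :: ('a::topological_space \<times> 'b::topological_space) set)"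
  shows "closed {c. \<forall>a\<in>U. (a, c) \<in> K}"
proof -
  have "{c. \<forall>a\<in>U. (a, c) \<in> K} = (\<Inter>a\<in>U. (\<lambda>c. (a, c)) -` K)" by auto
  moreover have "closed ((\<lambda>c. (a, c)) -` K)" for a
    using continuous_closed_preimage[of UNIV "\<lambda>c. (a, c)" K] assms
    by (simp add: continuous_on_Pair continuous_on_id continuous_on_const)
  ultimately show ?thesis by (simp add: closed_INT)
qed

lemma interior_E:
  assumes K: "interior (K :: ('a::topological_space \<times> 'b::topological_space) set) = {}"
    and U: "open U" "U \<noteq> {}"
  shows "interior {c. \<forall>a\<in>U. (a, c) \<in> K} = {}"
proof (rule ccontr)
  let ?E = "{c. \<forall>a\<in>U. (a, c) \<in> K}"
  assume "interior ?E \<noteq> {}"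
  then obtain c where c: "c \<in> interior ?E" by blast
  obtain a where a: "a \<in> U" using U(2) by blast
  have "open (U \<times> interior ?E)" using U(1) by (simp add: open_Times)
  moreover have "U \<times> interior ?E \<subseteq> K"
  proof
    fix p assume "p \<in> U \<times> interior ?E"
    then obtain x y where p: "p = (x, y)" "x \<in> U" "y \<in> interior ?E" by blast
    then have "y \<in> ?E" using interior_subset by blast
    then show "p \<in> K" using p by blast
  qed
  ultimately have "U \<times> interior ?E \<subseteq> interior K" by (rule interior_maximal[rotated])
  moreover have "(a, c) \<in> U \<times> interior ?E" using a c by blast
  ultimately show False using K by blast
qed


lemma meager_sections:
  fixes Q :: "('a::second_countable_topology \<times> 'b::topological_space) set"
  assumes "meager Q"
  shows "meager {c. \<not> meager {a. (a, c) \<in> Q}}"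
proof -
  obtain \<K> where K: "countable \<K>" "\<And>K. K \<in> \<K> \<Longrightarrow> closed K \<and> interior K = {}" "Q \<subseteq> \<Union>\<K>"
    using meager_closed_cover[OF assms] by metis
  obtain Bs :: "'a set set" where Bs: "countable Bs" "topological_basis Bs"
    using ex_countable_basis by blast
  define Ef :: "('a \<times> 'b) set \<times> 'a set \<Rightarrow> 'b set" where "Ef = (\<lambda>(K, U). {c. \<forall>a\<in>U. (a, c) \<in> K})"
  define \<E> where "\<E> = Ef ` (\<K> \<times> (Bs - {{}}))"
  have cE: "countable \<E>" unfolding \<E>_def using K(1) Bs(1) by simp
  have nE: "\<forall>E\<in>\<E>. nowhere_dense E"
  proof
    fix E assume "E \<in> \<E>"
    then obtain K U where KU: "K \<in> \<K>" "U \<in> Bs" "U \<noteq> {}" "E = {c. \<forall>a\<in>U. (a, c) \<in> K}"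
      unfolding \<E>_def Ef_def by blast
    have oU: "open U" using KU(2) Bs(2) by (rule topological_basis_open[rotated])
    have "closed E" unfolding KU(4) using K(2)[OF KU(1)] by (simp add: closed_E)
    moreover have "interior E = {}" unfolding KU(4)
      using K(2)[OF KU(1)] oU KU(3) by (simp add: interior_E)
    ultimately show "nowhere_dense E" by (rule nowhere_dense_closed)
  qed
  have sub: "{c. \<not> meager {a. (a, c) \<in> Q}} \<subseteq> \<Union>\<E>"
  proof
    fix c assume c: "c \<in> {c. \<not> meager {a. (a, c) \<in> Q}}"
    show "c \<in> \<Union>\<E>"
    proof (rule ccontr)
      assume nc: "c \<notin> \<Union>\<E>"
      have intK: "interior {a. (a, c) \<in> K} = {}" if KK: "K \<in> \<K>" for K
      proof (rule ccontr)
        assume "interior {a. (a, c) \<in> K} \<noteq> {}"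
        then obtain x where x: "x \<in> interior {a. (a, c) \<in> K}" by blast
        obtain U where U: "U \<in> Bs" "x \<in> U" "U \<subseteq> interior {a. (a, c) \<in> K}"
          using topological_basisE[OF Bs(2) open_interior x] by blast
        have "U \<subseteq> {a. (a, c) \<in> K}" using U(3) interior_subset by blast
        then have "c \<in> Ef (K, U)" unfolding Ef_def by auto
        moreover have "(K, U) \<in> \<K> \<times> (Bs - {{}})" using KK U(1) U(2) by blast
        ultimately have "c \<in> \<Union>\<E>" unfolding \<E>_def by blast
        then show False using nc by blast
      qed
      define \<F> where "\<F> = (\<lambda>K. {a. (a, c) \<in> K}) ` \<K>"
      have 1: "countable \<F>" unfolding \<F>_def using K(1) by simp
      have 2: "\<forall>A\<in>\<F>. nowhere_dense A"
      proof
        fix A assume "A \<in> \<F>"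
        then obtain K where KA: "K \<in> \<K>" "A = {a. (a, c) \<in> K}" unfolding \<F>_def by blast
        have "closed A" unfolding KA(2) using K(2)[OF KA(1)] by (simp add: closed_section)
        moreover have "interior A = {}" unfolding KA(2) using intK[OF KA(1)] .
        ultimately show "nowhere_dense A" by (rule nowhere_dense_closed)
      qed
      have 3: "{a. (a, c) \<in> Q} \<subseteq> \<Union>\<F>"
      proof
        fix a assume "a \<in> {a. (a, c) \<in> Q}"
        then obtain K where "K \<in> \<K>" "(a, c) \<in> K" using K(3) by blast
        then show "a \<in> \<Union>\<F>" unfolding \<F>_def by blast
      qed
      have "meager {a. (a, c) \<in> Q}" unfolding meager_def using 1 2 3 by blast
      then show False using c by simp
    qed
  qed
  show ?thesis unfolding meager_def[of "{c. \<not> meager {a. (a, c) \<in> Q}}"] by (intro exI[of _ \<E>] conjI cE nE sub)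
qed


definition hsplit :: "cs \<Rightarrow> cs \<times> cs" where
  "hsplit z = ((\<lambda>n. z (2 * n)), (\<lambda>n. z (2 * n + 1)))"

definition hjoin :: "cs \<times> cs \<Rightarrow> cs" where
  "hjoin p = (\<lambda>n. if even n then fst p (n div 2) else snd p (n div 2))"

lemma hjoin_hsplit: "hjoin (hsplit z) = z"
proof
  fix n :: nat
  show "hjoin (hsplit z) n = z n"
  proof (cases "even n")
    case True
    then have "2 * (n div 2) = n" by simp
    then show ?thesis using True unfolding hjoin_def hsplit_def by simp
  next
    case False
    then have "2 * (n div 2) + 1 = n" by presburger
    then show ?thesis using False unfolding hjoin_def hsplit_def by simp
  qed
qed

lemma hsplit_hjoin: "hsplit (hjoin p) = p"
proof -
  obtain a b where p: "p = (a, b)" by (cases p)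
  have "(\<lambda>n. hjoin p (2 * n)) = a" unfolding hjoin_def p by auto
  moreover have "(\<lambda>n. hjoin p (2 * n + 1)) = b" unfolding hjoin_def p by auto
  ultimately show ?thesis unfolding hsplit_def p by simp
qed

lemma cont_hsplit: "continuous_on UNIV hsplit"
proof -
  have 1: "continuous_on UNIV (\<lambda>z::cs. (\<lambda>n. z (2 * n)))"
    by (rule continuous_on_coordinatewise_then_product) simp
  have 2: "continuous_on UNIV (\<lambda>z::cs. (\<lambda>n. z (2 * n + 1)))"
    by (rule continuous_on_coordinatewise_then_product) simp
  show ?thesis unfolding hsplit_def by (rule continuous_on_Pair[OF 1 2])
qed

lemma cont_hjoin: "continuous_on UNIV hjoin"
  unfolding hjoin_def
proof (rule continuous_on_coordinatewise_then_product)
  fix n :: nat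
  show "continuous_on UNIV (\<lambda>p::cs \<times> cs. if even n then fst p (n div 2) else snd p (n div 2))"
  proof (cases "even n")
    case True
    have "continuous_on UNIV (\<lambda>p::cs \<times> cs. fst p (n div 2))"
      using continuous_on_compose[OF continuous_on_fst[OF continuous_on_id] continuous_on_subset[OF continuous_on_product_coordinates[of "n div 2"]]]
      by (simp add: o_def)
    then show ?thesis using True by simp
  next
    case False
    have "continuous_on UNIV (\<lambda>p::cs \<times> cs. snd p (n div 2))"
      using continuous_on_compose[OF continuous_on_snd[OF continuous_on_id] continuous_on_subset[OF continuous_on_product_coordinates[of "n div 2"]]]
      by (simp add: o_def)
    then show ?thesis using False by simp
  qed
qed

lemma homeo_hsplit: "homeomorphism UNIV UNIV hsplit hjoin"
  unfolding homeomorphism_def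
  using hjoin_hsplit hsplit_hjoin cont_hsplit cont_hjoin
  by (metis UNIV_I image_eqI subsetI subset_antisym UNIV_I)

lemma homeo_hjoin: "homeomorphism UNIV UNIV hjoin hsplit"
  using homeo_hsplit by (rule homeomorphism_symD)


definition tr :: "cs \<Rightarrow> cs \<Rightarrow> cs" where
  "tr x y = (\<lambda>n. x n \<noteq> y n)"

lemma tr_tr: "tr x (tr x y) = y"
  unfolding tr_def by auto

lemma tr_swap: "tr y (tr x y) = x"
  unfolding tr_def by auto

lemma cont_tr: "continuous_on UNIV (tr x)"
  unfolding tr_def
proof (rule continuous_on_coordinatewise_then_product)
  fix n :: nat
  have cb: "continuous_on (UNIV::bool set) (\<lambda>b. x n \<noteq> b)"
    by (simp add: continuous_on_open_vimage open_discrete)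
  have "continuous_on UNIV (\<lambda>y::cs. (\<lambda>b. x n \<noteq> b) (y n))"
    using continuous_on_compose[OF continuous_on_product_coordinates[of n] continuous_on_subset[OF cb]]
    by (simp add: o_def)
  then show "continuous_on UNIV (\<lambda>y::cs. x n \<noteq> y n)" by simp
qed

lemma homeo_tr: "homeomorphism UNIV UNIV (tr x) (tr x)"
  unfolding homeomorphism_def using tr_tr cont_tr
  by (metis UNIV_I image_eqI subsetI subset_antisym)

lemma meager_avoid:
  assumes "meager (N :: cs set)"
  shows "\<exists>y. y \<notin> N \<and> tr x y \<notin> N"
proof -
  have "meager (N \<union> tr x ` N)" using assms meager_homeo[OF homeo_tr assms] meager_Un by blast
  then have "N \<union> tr x ` N \<noteq> UNIV" using not_meager_UNIV by metis
  then obtain y where y: "y \<notin> N" "y \<notin> tr x ` N" by blast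
  have "tr x y \<notin> N"
  proof
    assume "tr x y \<in> N"
    then have "tr x (tr x y) \<in> tr x ` N" by blast
    then show False using y(2) tr_tr by simp
  qed
  then show ?thesis using y(1) by blast
qed

lemma comeager_large:
  assumes "meager (N :: cs set)"
  shows "(card_of (UNIV :: cs set), card_of ((- N) \<times> (- N))) \<in> ordLeq"
proof -
  have "UNIV \<subseteq> (\<lambda>(a, b). tr a b) ` ((- N) \<times> (- N))"
  proof
    fix x :: cs
    obtain y where y: "y \<notin> N" "tr x y \<notin> N" using meager_avoid[OF assms] by blast
    have "x = (\<lambda>(a, b). tr a b) (y, tr x y)" using tr_swap by simp
    moreover have "(y, tr x y) \<in> (- N) \<times> (- N)" using y by blast
    ultimately show "x \<in> (\<lambda>(a, b). tr a b) ` ((- N) \<times> (- N))" by blast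
  qed
  then have "(card_of (UNIV :: cs set), card_of ((\<lambda>(a, b). tr a b) ` ((- N) \<times> (- N)))) \<in> ordLeq"
    by (rule card_of_mono1)
  moreover have "(card_of ((\<lambda>(a, b). tr a b) ` ((- N) \<times> (- N))), card_of ((- N) \<times> (- N))) \<in> ordLeq"
    by (rule card_of_image)
  ultimately show ?thesis by (rule ordLeq_transitive)
qed

lemma compact_UNIV_cs: "compact (UNIV :: cs set)"
  using compact_space_cs unfolding compact_space_def by (simp add: compactin_euclidean_iff)

lemma infinite_cs: "infinite (UNIV :: cs set)"
proof
  assume "finite (UNIV :: cs set)"
  moreover have "inj (\<lambda>n::nat. (\<lambda>m::nat. m = n))" by (rule injI) metis
  ultimately have "finite (UNIV :: nat set)" using finite_imageD[of "\<lambda>n::nat. (\<lambda>m::nat. m = n)" UNIV]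
    by (meson finite_subset subset_UNIV)
  then show False by simp
qed

lemma closed_singleton_cs: "closed {x :: cs}"
proof -
  have "{x} = (\<Inter>n. (\<lambda>y::cs. y n) -` {x n})" by (auto simp: fun_eq_iff)
  moreover have "closed ((\<lambda>y::cs. y n) -` {x n})" for n
    using continuous_closed_preimage[of UNIV "\<lambda>y::cs. y n" "{x n}"]
    by (simp add: closed_def open_discrete)
  ultimately show ?thesis by (simp add: closed_INT)
qed

lemma not_open_singleton_cs: "\<not> open {x :: cs}"
proof
  assume ox: "open {x :: cs}"
  have oy: "open {y}" for y :: cs
  proof -
    define a where "a = tr x y"
    have e: "tr a x = y" unfolding a_def tr_def by (rule ext) auto
    have "tr a -` {x} = {y}"
    proof (rule set_eqI)
      fix z
      show "z \<in> tr a -` {x} \<longleftrightarrow> z \<in> {y}"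
      proof
        assume "z \<in> tr a -` {x}"
        then have "tr a z = x" by simp
        then have "tr a (tr a z) = tr a x" by simp
        then show "z \<in> {y}" using e tr_tr[of a z] by simp
      next
        assume "z \<in> {y}"
        then have "z = tr a x" using e by simp
        then show "z \<in> tr a -` {x}" using tr_tr[of a x] by simp
      qed
    qed
    moreover have ov: "\<forall>B. open B \<longrightarrow> open (tr a -` B \<inter> UNIV)"
      using continuous_on_open_vimage[of UNIV "tr a"] cont_tr by simp
    ultimately show ?thesis using ox by (metis Int_UNIV_right)
  qed
  have "\<And>T. T \<in> UNIV \<Longrightarrow> open ((\<lambda>y::cs. {y}) T)" using oy by simp
  moreover have "UNIV \<subseteq> (\<Union>c\<in>UNIV. {c :: cs})" by blast
  ultimately obtain C' where C': "finite C'" "UNIV \<subseteq> (\<Union>c\<in>C'. {c :: cs})"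
    using compactE_image[OF compact_UNIV_cs, of UNIV "\<lambda>y. {y}"] by metis
  have "UNIV \<subseteq> C'" using C'(2) by blast
  then have "finite (UNIV :: cs set)" using C'(1) finite_subset by blast
  then show False using infinite_cs by simp
qed

lemma meager_singleton_cs: "meager {x :: cs}"
proof -
  have "interior {x} = {}"
  proof (rule ccontr)
    assume "interior {x} \<noteq> {}"
    then have "interior {x} = {x}" using interior_subset[of "{x}"] by blast
    then have "open {x}" by (metis open_interior)
    then show False using not_open_singleton_cs by blast
  qed
  then have "nowhere_dense {x}" using closed_singleton_cs by (simp add: nowhere_dense_closed)
  then show ?thesis unfolding meager_def by (intro exI[of _ "{{x}}"]) simp
qed


definition Cl :: "cs set set" where
  "Cl = {K. closed K \<and> interior K = {}}"

definition G1 :: "cs set set" where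
  "G1 = (\<lambda>f :: nat \<Rightarrow> cs set. \<Union>(range f)) ` {f :: nat \<Rightarrow> cs set. \<forall>n. f n \<in> Cl}"

lemma G1_meager: "G1 \<subseteq> meager_ideal"
proof
  fix B assume "B \<in> G1"
  then obtain f :: "nat \<Rightarrow> cs set" where f: "\<forall>n. f n \<in> Cl" "B = \<Union>(range f)" unfolding G1_def by blast
  have "\<forall>A\<in>range f. nowhere_dense A"
  proof
    fix A assume "A \<in> range f"
    then obtain n where "A = f n" by blast
    then have "A \<in> Cl" using f(1) by simp
    then have "closed A" "interior A = {}" unfolding Cl_def by simp_all
    then show "nowhere_dense A" by (rule nowhere_dense_closed)
  qed
  moreover have "countable (range f)" by simp
  moreover have "B \<subseteq> \<Union>(range f)" using f(2) by simp
  ultimately have "meager B" unfolding meager_def by (intro exI[of _ "range f"] conjI)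
  then show "B \<in> meager_ideal" unfolding meager_ideal_def by simp
qed

lemma G1_cofinal: "M \<in> meager_ideal \<Longrightarrow> \<exists>B\<in>G1. M \<subseteq> B"
proof -
  assume "M \<in> meager_ideal"
  then have "meager M" unfolding meager_ideal_def by simp
  then obtain \<K> where K: "countable \<K>" "\<And>K. K \<in> \<K> \<Longrightarrow> closed K \<and> interior K = {}" "M \<subseteq> \<Union>\<K>"
    using meager_closed_cover by metis
  show ?thesis
  proof (cases "\<K> = {}")
    case True
    have "(\<lambda>_::nat. {} :: cs set) \<in> {f. \<forall>n. f n \<in> Cl}" unfolding Cl_def by simp
    then have "\<Union>(range (\<lambda>_::nat. {} :: cs set)) \<in> G1" unfolding G1_def by (rule imageI)
    moreover have "M \<subseteq> \<Union>(range (\<lambda>_::nat. {} :: cs set))" using K(3) True by simp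
    ultimately show ?thesis by blast
  next
    case False
    define f where "f = from_nat_into \<K>"
    have r: "range f = \<K>" unfolding f_def using range_from_nat_into[OF False K(1)] .
    have "\<forall>n. f n \<in> Cl" using K(2) r unfolding Cl_def by blast
    then have "\<Union>(range f) \<in> G1" unfolding G1_def by (intro imageI) simp
    moreover have "M \<subseteq> \<Union>(range f)" using K(3) r by simp
    ultimately show ?thesis by blast
  qed
qed

lemma closed_code_inj:
  obtains enc :: "cs set \<Rightarrow> nat set" where "inj_on enc {K. closed K}"
proof -
  obtain Bs :: "cs set set" where Bs: "countable Bs" "topological_basis Bs"
    using ex_countable_basis by blast
  have ne: "Bs \<noteq> {}"
  proof
    assume "Bs = {}"
    obtain x :: cs where "True" by simp
    obtain V where "V \<in> Bs" "x \<in> V" "V \<subseteq> UNIV"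
      using topological_basisE[OF Bs(2) open_UNIV, of x] by blast
    then show False using \<open>Bs = {}\<close> by simp
  qed
  define b where "b = from_nat_into Bs"
  have rb: "range b = Bs" unfolding b_def using range_from_nat_into[OF ne Bs(1)] .
  define enc where "enc K = {n. b n \<subseteq> - K}" for K :: "cs set"
  have rec: "- K = \<Union>{b n | n. n \<in> enc K}" if "closed K" for K
  proof
    show "- K \<subseteq> \<Union>{b n | n. n \<in> enc K}"
    proof
      fix x assume x: "x \<in> - K"
      have "open (- K)" using that by (simp add: open_Compl)
      then obtain V where V: "V \<in> Bs" "x \<in> V" "V \<subseteq> - K"
        using topological_basisE[OF Bs(2) _ x] by blast
      then obtain n where "V = b n" using rb by blast
      then show "x \<in> \<Union>{b n | n. n \<in> enc K}" using V unfolding enc_def by blast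
    qed
    show "\<Union>{b n | n. n \<in> enc K} \<subseteq> - K" unfolding enc_def by blast
  qed
  have "inj_on enc {K. closed K}"
  proof (rule inj_onI)
    fix K K' assume K: "K \<in> {K. closed K}" and K': "K' \<in> {K. closed K}" and e: "enc K = enc K'"
    have "- K = - K'" using rec[of K] rec[of K'] K K' e by simp
    then show "K = K'" by simp
  qed
  then show ?thesis by (rule that)
qed

lemma G1_card: "(card_of G1, card_of (UNIV :: cs set)) \<in> ordLeq"
proof -
  obtain enc :: "cs set \<Rightarrow> nat set" where enc: "inj_on enc {K. closed K}"
    by (rule closed_code_inj)
  define S1 where "S1 = {f :: nat \<Rightarrow> cs set. \<forall>n. f n \<in> Cl}"
  define code :: "(nat \<Rightarrow> cs set) \<Rightarrow> cs" where
    "code f = (\<lambda>k. snd (prod_decode k) \<in> enc (f (fst (prod_decode k))))" for f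
  have "inj_on code S1"
  proof (rule inj_onI)
    fix f g assume f: "f \<in> S1" and g: "g \<in> S1" and e: "code f = code g"
    show "f = g"
    proof
      fix n
      have "enc (f n) = enc (g n)"
      proof (rule set_eqI)
        fix m
        have "code f (prod_encode (n, m)) = code g (prod_encode (n, m))" using e by simp
        then show "m \<in> enc (f n) \<longleftrightarrow> m \<in> enc (g n)" unfolding code_def by simp
      qed
      moreover have "f n \<in> {K. closed K}" "g n \<in> {K. closed K}"
        using f g unfolding S1_def Cl_def by auto
      ultimately show "f n = g n" using enc by (meson inj_onD)
    qed
  qed
  then have "(card_of S1, card_of (UNIV :: cs set)) \<in> ordLeq"
    using card_of_ordLeq[of S1 "UNIV :: cs set"] by blast
  moreover have "(card_of G1, card_of S1) \<in> ordLeq"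
    unfolding G1_def S1_def by (rule card_of_image)
  ultimately show ?thesis using ordLeq_transitive by blast
qed


lemma part2:
  assumes G: "meager_cofinal_family G"
  shows "\<exists>F. comparable_family (meager_ideal - {{}}) (\<subseteq>) F \<and> (card_of F, card_of G) \<in> ordLeq"
proof (intro exI conjI)
  show "(card_of (G - {{}}), card_of G) \<in> ordLeq" by (rule card_of_mono1) blast
  have G1: "G \<subseteq> meager_ideal" and G2: "\<forall>M\<in>meager_ideal. \<exists>B\<in>G. M \<subseteq> B"
    using G unfolding meager_cofinal_family_def by auto
  have "G - {{}} \<subseteq> meager_ideal - {{}}" using G1 by blast
  moreover have "\<forall>p\<in>meager_ideal - {{}}. \<exists>q\<in>G - {{}}. p \<subseteq> q \<or> q \<subseteq> p"
  proof
    fix p assume p: "p \<in> meager_ideal - {{}}"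
    then obtain B where B: "B \<in> G" "p \<subseteq> B" using G2 by blast
    then have "B \<noteq> {}" using p by blast
    then show "\<exists>q\<in>G - {{}}. p \<subseteq> q \<or> q \<subseteq> p" using B by blast
  qed
  ultimately show "comparable_family (meager_ideal - {{}}) (\<subseteq>) (G - {{}})"
    unfolding comparable_family_def by blast
qed

lemma part1:
  assumes F: "comparable_family (meager_ideal - {{}}) (\<subseteq>) F"
  shows "\<exists>G. meager_cofinal_family G \<and> (card_of G, card_of F) \<in> ordLeq"
proof -
  have Fsub: "F \<subseteq> meager_ideal - {{}}" and Fcomp: "\<forall>p\<in>meager_ideal - {{}}. \<exists>q\<in>F. p \<subseteq> q \<or> q \<subseteq> p"
    using F unfolding comparable_family_def by auto
  have Fm: "meager q" "q \<noteq> {}" if "q \<in> F" for q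
    using Fsub that unfolding meager_ideal_def by auto
  define Bad where "Bad q = {c. \<not> meager {a. (a, c) \<in> hsplit ` q}}" for q
  have mBad: "meager (Bad q)" if "q \<in> F" for q
    unfolding Bad_def by (rule meager_sections[OF meager_homeo[OF homeo_hsplit Fm(1)[OF that]]])
  define s where "s q = snd (hsplit (SOME z. z \<in> q))" for q
  define S where "S = s ` F"
  show ?thesis
  proof (cases "\<exists>q\<in>F. - Bad q \<subseteq> S")
    case True
    then obtain q where q: "q \<in> F" "- Bad q \<subseteq> S" by blast
    have c1: "(card_of (UNIV :: cs set), card_of ((- Bad q) \<times> (- Bad q))) \<in> ordLeq"
      by (rule comeager_large[OF mBad[OF q(1)]])
    have "(- Bad q) \<times> (- Bad q) \<subseteq> (\<lambda>(x, y). (s x, s y)) ` (F \<times> F)"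
    proof
      fix p assume "p \<in> (- Bad q) \<times> (- Bad q)"
      then obtain u v where p: "p = (u, v)" "u \<in> S" "v \<in> S" using q(2) by blast
      then obtain x y where "x \<in> F" "y \<in> F" "u = s x" "v = s y" unfolding S_def by blast
      then show "p \<in> (\<lambda>(x, y). (s x, s y)) ` (F \<times> F)" using p(1) by force
    qed
    then have "(card_of ((- Bad q) \<times> (- Bad q)), card_of ((\<lambda>(x, y). (s x, s y)) ` (F \<times> F))) \<in> ordLeq"
      by (rule card_of_mono1)
    moreover have "(card_of ((\<lambda>(x, y). (s x, s y)) ` (F \<times> F)), card_of (F \<times> F)) \<in> ordLeq"
      by (rule card_of_image)
    ultimately have c2: "(card_of (UNIV :: cs set), card_of (F \<times> F)) \<in> ordLeq"
      using c1 ordLeq_transitive by metis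
    have infF: "infinite F"
    proof
      assume "finite F"
      then have "finite (F \<times> F)" by simp
      then have "finite (UNIV :: cs set)" using card_of_ordLeq_finite[OF c2] by simp
      then show False using infinite_cs by simp
    qed
    have "(card_of (F \<times> F), card_of F) \<in> ordIso" using card_of_Times_same_infinite[OF infF] .
    then have c3: "(card_of (UNIV :: cs set), card_of F) \<in> ordLeq" using c2 ordLeq_ordIso_trans by metis
    have "meager_cofinal_family G1" unfolding meager_cofinal_family_def using G1_meager G1_cofinal by blast
    moreover have "(card_of G1, card_of F) \<in> ordLeq" using G1_card c3 ordLeq_transitive by metis
    ultimately show ?thesis by blast
  next
    case False
    then have ex: "\<exists>c. c \<notin> Bad q \<and> c \<notin> S" if "q \<in> F" for q using that by blast
    define cq where "cq q = (SOME c. c \<notin> Bad q \<and> c \<notin> S)" for q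
    have cq: "cq q \<notin> Bad q" "cq q \<notin> S" if "q \<in> F" for q
      using someI_ex[OF ex[OF that]] unfolding cq_def by auto
    define sec where "sec q = {a. (a, cq q) \<in> hsplit ` q}" for q
    define G where "G = sec ` F"
    have Gm: "G \<subseteq> meager_ideal"
    proof
      fix B assume "B \<in> G"
      then obtain q where q: "q \<in> F" "B = sec q" unfolding G_def by blast
      have "meager B" using cq(1)[OF q(1)] unfolding q(2) sec_def Bad_def by simp
      then show "B \<in> meager_ideal" unfolding meager_ideal_def by simp
    qed
    obtain x0 :: cs where "True" by simp
    have "{x0} \<in> meager_ideal - {{}}" using meager_singleton_cs unfolding meager_ideal_def by simp
    then obtain q0 where q0: "q0 \<in> F" using Fcomp by blast
    have Gc: "\<exists>B\<in>G. M \<subseteq> B" if M: "M \<in> meager_ideal" for M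
    proof (cases "M = {}")
      case True
      then show ?thesis using q0 unfolding G_def by blast
    next
      case False
      then obtain a0 where a0: "a0 \<in> M" by blast
      have mM: "meager M" using M unfolding meager_ideal_def by simp
      define p where "p = hjoin ` (M \<times> (- S))"
      have "meager (hjoin ` (M \<times> (UNIV :: cs set)))"
        by (rule meager_homeo[OF homeo_hjoin meager_Times_UNIV[OF mM]])
      moreover have "p \<subseteq> hjoin ` (M \<times> (UNIV :: cs set))" unfolding p_def by blast
      ultimately have mp: "meager p" by (rule meager_subset)
      have "hjoin (a0, cq q0) \<in> p" unfolding p_def using a0 cq(2)[OF q0] by blast
      then have "p \<in> meager_ideal - {{}}" using mp unfolding meager_ideal_def by blast
      then obtain q where q: "q \<in> F" "p \<subseteq> q \<or> q \<subseteq> p" using Fcomp by blast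
      have "\<not> q \<subseteq> p"
      proof
        assume qp: "q \<subseteq> p"
        define z where "z = (SOME z. z \<in> q)"
        have "z \<in> q" unfolding z_def using Fm(2)[OF q(1)] by (simp add: some_in_eq)
        then have "z \<in> p" using qp by blast
        then obtain a c where ac: "a \<in> M" "c \<in> - S" "z = hjoin (a, c)" unfolding p_def by blast
        have "s q = c" unfolding s_def z_def[symmetric] ac(3) hsplit_hjoin by simp
        moreover have "s q \<in> S" unfolding S_def using q(1) by blast
        ultimately show False using ac(2) by blast
      qed
      then have pq: "p \<subseteq> q" using q(2) by blast
      have "M \<subseteq> sec q"
      proof
        fix a assume "a \<in> M"
        then have "hjoin (a, cq q) \<in> p" unfolding p_def using cq(2)[OF q(1)] by blast
        then have "hjoin (a, cq q) \<in> q" using pq by blast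
        then have "hsplit (hjoin (a, cq q)) \<in> hsplit ` q" by (rule imageI)
        then show "a \<in> sec q" unfolding sec_def hsplit_hjoin by simp
      qed
      then show ?thesis unfolding G_def using q(1) by blast
    qed
    have "meager_cofinal_family G" unfolding meager_cofinal_family_def using Gm Gc by blast
    moreover have "(card_of G, card_of F) \<in> ordLeq" unfolding G_def by (rule card_of_image)
    ultimately show ?thesis by blast
  qed
qed

theorem mainTheorem14:
  shows "(\<forall>F. comparable_family (meager_ideal - {{}}) (\<subseteq>) F \<longrightarrow>
            (\<exists>G. meager_cofinal_family G \<and> (card_of G, card_of F) \<in> ordLeq))
       \<and> (\<forall>G. meager_cofinal_family G \<longrightarrow>
            (\<exists>F. comparable_family (meager_ideal - {{}}) (\<subseteq>) F \<and> (card_of F, card_of G) \<in> ordLeq))"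
  using part1 part2 by blast

end
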